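(* Assume that $f$ is convex and $L$-smooth relative to $d$ on $Q$ for some $L>0$, that the Bregman divergence $V$ satisfies the triangular scaling property with scaling factor $\gamma=2$, and that for every $k\ge 0$ the pairs $(f_{\delta_k}(y),\nabla f_{\delta_k}(y))$ used by Algorithm AdapFGM are $(\delta_k,L)$-oracles of $f$ at every point $y\in Q$. Let $x_*$ be a minimizer of $f$ on $Q$, and let $R>0$ satisfy $V(x_*,x_0)\le R^2$. Then for every $N\ge 1$ the iterates of Algorithm AdapFGM (started with $L_0\in(0,2L)$) satisfy $$f(x_N)-f(x_* )\le \frac{8LR^2}{(N+1)^2}+\frac{2\sum_{k=0}^{N-1}A_{k+1}\delta_k}{A_N}.$$
   Context: Setting. $\mathbb{E}$ is a finite-dimensional real vector space with a norm $\|\cdot\|$ and dual space $\mathbb{E}^*$; $\langle g,x\rangle$ denotes the value of $g\in\mathbb{E}^*$ at $x\in\mathbb{E}$. $Q\subset\mathbb{E}$ is a closed convex set. $f:Q\to\mathbb{R}$ is convex and differentiable on an open set containing the relative interior $\mathrm{rint}\,Q$. The prox-function $d:Q\to\mathbb{R}$ is continuously differentiable and $1$-strongly convex with respect to $\|\cdot\|$. The Bregman divergence is $V(x,y)=d(x)-d(y)-\langle\nabla d(y),x-y\rangle$. All minimization subproblems appearing in the algorithms are assumed to have minimizers. Relative smoothness: $f$ is $L$-smooth relative to $d$ on $Q$ if $f(y)\le f(x)+\langle\nabla f(x),y-x\rangle+LV(y,x)$ for all $x\in\mathrm{rint}\,Q$, $y\in Q$. Triangular scaling property with factor $\gamma>0$: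 $V((1-\theta)x+\theta z,(1-\theta)x+\theta\tilde z)\le\theta^{\gamma}V(z,\tilde z)$ for all $x,z,\tilde z\in Q$ and all $\theta\in[0,1]$. $(\delta,L)$-oracle: a pair $(f_\delta(y),\nabla f_\delta(y))\in\mathbb{R}\times\mathbb{E}^*$ is a $(\delta,L)$-oracle of $f$ at $y$ if $0\le f(x)-\big(f_\delta(y)+\langle\nabla f_\delta(y),x-y\rangle\big)\le LV(x,y)+\delta$ for all $x\in Q$. Algorithm AdapFGM. Input: $x_0\in Q$, positive numbers $\{\delta_k\}_{k\ge0}$, and $L_0>0$. Set $y_0=u_0=x_0$, $\alpha_0=0$, $A_0=0$. For $k=0,1,2,\dots$: find the smallest integer $i_k\ge0$ such that, with $L_{k+1}=2^{i_k-1}L_k$, $\alpha_{k+1}$ the largest root of $A_k+\alpha=L_{k+1}\alpha^2$, $A_{k+1}=A_k+\alpha_{k+1}$ (so $A_{k+1}=L_{k+1}\alpha_{k+1}^2$), $y_{k+1}=\frac{\alpha_{k+1}u_k+A_kx_k}{A_{k+1}}$, $u_{k+1}=\arg\min_{x\in Q}\{\alpha_{k+1}\langle\nabla f_{\delta_k}(y_{k+1}),x-y_{k+1}\rangle+V(x,u_k)\}$, $x_{k+1}=\frac{\alpha_{k+1}u_{k+1}+A_kx_k}{A_{k+1}}$, the inequality $f_{\delta_k}(x_{k+1})\le f_{\delta_k}(y_{k+1})+\langle\nabla f_{\delta_k}(y_{k+1}),x_{k+1}-y_{k+1}\rangle+L_{k+1}V(x_{k+1},y_{k+1})+\delta_k$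 holds; these $L_{k+1},\alpha_{k+1},A_{k+1},y_{k+1},u_{k+1},x_{k+1}$ are the next iterates. *)

theory Defs
  imports "HOL-Analysis.Analysis"
begin

text \<open>The finite-dimensional space E is a type of class euclidean_space; its dual
is identified with E via the inner product, so a functional g acts as g \<bullet> x.
The norm of the paper is an arbitrary norm nrm (not necessarily the Euclidean one).\<close>

definition is_norm_fn :: "('a::real_vector \<Rightarrow> real) \<Rightarrow> bool" where
  "is_norm_fn nrm \<longleftrightarrow>
     (\<forall>x. 0 \<le> nrm x) \<and> (\<forall>x. nrm x = 0 \<longleftrightarrow> x = 0) \<and>
     (\<forall>c x. nrm (c *\<^sub>R x) = \<bar>c\<bar> * nrm x) \<and>
     (\<forall>x y. nrm (x + y) \<le> nrm x + nrm y)"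

definition strongly_convex_wrt :: "'a::real_vector set \<Rightarrow> ('a \<Rightarrow> real) \<Rightarrow> ('a \<Rightarrow> real) \<Rightarrow> bool" where
  "strongly_convex_wrt Q d nrm \<longleftrightarrow>
     (\<forall>x\<in>Q. \<forall>y\<in>Q. \<forall>t\<in>{0..1}.
        d ((1 - t) *\<^sub>R x + t *\<^sub>R y) \<le> (1 - t) * d x + t * d y - t * (1 - t) / 2 * (nrm (x - y))\<^sup>2)"

definition bregman :: "('a::real_inner \<Rightarrow> real) \<Rightarrow> ('a \<Rightarrow> 'a) \<Rightarrow> 'a \<Rightarrow> 'a \<Rightarrow> real" where
  "bregman d gd x y = d x - d y - gd y \<bullet> (x - y)"

definition rel_smooth :: "'a::euclidean_space set \<Rightarrow> ('a \<Rightarrow> real) \<Rightarrow> ('a \<Rightarrow> 'a) \<Rightarrow> ('a \<Rightarrow> real) \<Rightarrow> ('a \<Rightarrow> 'a) \<Rightarrow> real \<Rightarrow> bool" where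
  "rel_smooth Q f gf d gd L \<longleftrightarrow>
     (\<forall>x\<in>rel_interior Q. \<forall>y\<in>Q. f y \<le> f x + gf x \<bullet> (y - x) + L * bregman d gd y x)"

definition triangular_scaling :: "'a::real_inner set \<Rightarrow> ('a \<Rightarrow> real) \<Rightarrow> ('a \<Rightarrow> 'a) \<Rightarrow> real \<Rightarrow> bool" where
  "triangular_scaling Q d gd \<gamma> \<longleftrightarrow>
     (\<forall>x\<in>Q. \<forall>z\<in>Q. \<forall>z'\<in>Q. \<forall>\<theta>\<in>{0..1}.
        bregman d gd ((1 - \<theta>) *\<^sub>R x + \<theta> *\<^sub>R z) ((1 - \<theta>) *\<^sub>R x + \<theta> *\<^sub>R z')
          \<le> \<theta> powr \<gamma> * bregman d gd z z')"

definition is_dL_orc :: "'a::real_inner set \<Rightarrow> ('a \<Rightarrow> real) \<Rightarrow> ('a \<Rightarrow> 'a) \<Rightarrow>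
    real \<Rightarrow> real \<Rightarrow> ('a \<Rightarrow> real) \<Rightarrow> ('a \<Rightarrow> real) \<Rightarrow> ('a \<Rightarrow> 'a) \<Rightarrow> 'a \<Rightarrow> bool" where
  "is_dL_orc Q d gd \<delta> L f fd gdd y \<longleftrightarrow>
     (\<forall>x\<in>Q. 0 \<le> f x - (fd y + gdd y \<bullet> (x - y)) \<and>
             f x - (fd y + gdd y \<bullet> (x - y)) \<le> L * bregman d gd x y + \<delta>)"

definition adap_trial :: "'a::real_inner set \<Rightarrow> ('a \<Rightarrow> real) \<Rightarrow> ('a \<Rightarrow> 'a) \<Rightarrow>
    ('a \<Rightarrow> real) \<Rightarrow> ('a \<Rightarrow> 'a) \<Rightarrow> real \<Rightarrow>
    real \<Rightarrow> real \<Rightarrow> 'a \<Rightarrow> 'a \<Rightarrow> nat \<Rightarrow>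
    real \<Rightarrow> real \<Rightarrow> real \<Rightarrow> 'a \<Rightarrow> 'a \<Rightarrow> 'a \<Rightarrow> bool" where
  "adap_trial Q d gd fd gdd \<delta> Lk Ak xk uk i L' \<alpha>' A' y' u' x' \<longleftrightarrow>
     L' = 2 powr (real i - 1) * Lk \<and>
     Ak + \<alpha>' = L' * \<alpha>'\<^sup>2 \<and> (\<forall>\<beta>::real. Ak + \<beta> = L' * \<beta>\<^sup>2 \<longrightarrow> \<beta> \<le> \<alpha>') \<and>
     A' = Ak + \<alpha>' \<and>
     y' = (1 / A') *\<^sub>R (\<alpha>' *\<^sub>R uk + Ak *\<^sub>R xk) \<and>
     u' \<in> Q \<and>
     (\<forall>x\<in>Q. \<alpha>' * (gdd y' \<bullet> (u' - y')) + bregman d gd u' uk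
              \<le> \<alpha>' * (gdd y' \<bullet> (x - y')) + bregman d gd x uk) \<and>
     x' = (1 / A') *\<^sub>R (\<alpha>' *\<^sub>R u' + Ak *\<^sub>R xk) \<and>
     fd x' \<le> fd y' + gdd y' \<bullet> (x' - y') + L' * bregman d gd x' y' + \<delta>"

definition adapfgm_run :: "'a::real_inner set \<Rightarrow> ('a \<Rightarrow> real) \<Rightarrow> ('a \<Rightarrow> 'a) \<Rightarrow>
    (nat \<Rightarrow> 'a \<Rightarrow> real) \<Rightarrow> (nat \<Rightarrow> 'a \<Rightarrow> 'a) \<Rightarrow> (nat \<Rightarrow> real) \<Rightarrow> 'a \<Rightarrow> real \<Rightarrow>
    (nat \<Rightarrow> real) \<Rightarrow> (nat \<Rightarrow> real) \<Rightarrow> (nat \<Rightarrow> real) \<Rightarrow> (nat \<Rightarrow> 'a) \<Rightarrow> (nat \<Rightarrow> 'a) \<Rightarrow> (nat \<Rightarrow> 'a) \<Rightarrow>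
    (nat \<Rightarrow> nat) \<Rightarrow> bool" where
  "adapfgm_run Q d gd fd gdd \<delta> x0 L0 Ls \<alpha>s As ys us xs ik \<longleftrightarrow>
     Ls 0 = L0 \<and> \<alpha>s 0 = 0 \<and> As 0 = 0 \<and> ys 0 = x0 \<and> us 0 = x0 \<and> xs 0 = x0 \<and>
     (\<forall>k. adap_trial Q d gd (fd k) (gdd k) (\<delta> k) (Ls k) (As k) (xs k) (us k) (ik k)
             (Ls (Suc k)) (\<alpha>s (Suc k)) (As (Suc k)) (ys (Suc k)) (us (Suc k)) (xs (Suc k)) \<and>
          (\<forall>j < ik k. \<not> (\<exists>L' \<alpha>' A' y' u' x'.
             adap_trial Q d gd (fd k) (gdd k) (\<delta> k) (Ls k) (As k) (xs k) (us k) j L' \<alpha>' A' y' u' x')))"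

end

theory Submission
  imports Defs
begin

lemma dir_lim:
  fixes Q :: "'a::euclidean_space set"
  assumes Q: "convex Q" and y: "y\<in>Q" and z: "z\<in>Q"
    and dd: "\<forall>x\<in>Q. (d has_derivative (\<lambda>h. gd x \<bullet> h)) (at x within Q)"
  shows "((\<lambda>t. (d (y + t *\<^sub>R (z - y)) - d y) / t) \<longlongrightarrow> gd y \<bullet> (z - y)) (at_right 0)"
proof -
  let ?p = "\<lambda>t::real. y + t *\<^sub>R (z - y)"
  have sub: "?p ` {0..1} \<subseteq> Q"
  proof
    fix w assume "w \<in> ?p ` {0..1}"
    then obtain t where t: "t \<in> {0..1}" "w = ?p t" by auto
    have "w = (1 - t) *\<^sub>R y + t *\<^sub>R z" using t by (simp add: algebra_simps)
    then show "w \<in> Q" using Q y z t unfolding convex_alt by auto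
  qed
  have hp: "(?p has_derivative (\<lambda>t. t *\<^sub>R (z - y))) (at 0 within {0..1})"
    by (auto intro!: derivative_eq_intros)
  have hc: "((\<lambda>t. d (?p t)) has_derivative (\<lambda>s. gd (?p 0) \<bullet> (s *\<^sub>R (z - y)))) (at 0 within {0..1})"
    by (rule has_derivative_in_compose2[OF _ sub _ hp]) (use dd in auto)
  have "((\<lambda>t. d (?p t)) has_field_derivative (gd y \<bullet> (z - y))) (at 0 within {0..1})"
    unfolding has_field_derivative_def
    using hc by (rule has_derivative_eq_rhs) (auto simp: fun_eq_iff)
  then show ?thesis
    unfolding has_field_derivative_iff at_within_Icc_at_right[of "0::real" 1, simplified]
    by simp
qed

lemma breg_ge:
  fixes Q :: "'a::euclidean_space set"
  assumes Q: "convex Q" and y: "y\<in>Q" and x: "x\<in>Q"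
    and dd: "\<forall>x\<in>Q. (d has_derivative (\<lambda>h. gd x \<bullet> h)) (at x within Q)"
    and sc: "strongly_convex_wrt Q d nrm"
  shows "bregman d gd x y \<ge> (nrm (y - x))\<^sup>2 / 2"
proof -
  let ?n = "(nrm (y - x))\<^sup>2"
  have lim: "((\<lambda>t. (d (y + t *\<^sub>R (x - y)) - d y) / t) \<longlongrightarrow> gd y \<bullet> (x - y)) (at_right 0)"
    by (rule dir_lim[OF Q y x dd])
  have lim2: "((\<lambda>t::real. d x - d y - (1 - t) / 2 * ?n) \<longlongrightarrow> d x - d y - (1 - 0) / 2 * ?n) (at_right 0)"
    by (intro tendsto_intros) auto
  have ev: "eventually (\<lambda>t. (d (y + t *\<^sub>R (x - y)) - d y) / t \<le> d x - d y - (1 - t) / 2 * ?n) (at_right (0::real))"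
  proof (rule eventually_at_rightI[of 0 1])
    fix t :: real assume t: "t \<in> {0<..<1}"
    have "d ((1 - t) *\<^sub>R y + t *\<^sub>R x) \<le> (1 - t) * d y + t * d x - t * (1 - t) / 2 * ?n"
      using sc y x t unfolding strongly_convex_wrt_def by auto
    moreover have "(1 - t) *\<^sub>R y + t *\<^sub>R x = y + t *\<^sub>R (x - y)" by (simp add: algebra_simps)
    ultimately have "d (y + t *\<^sub>R (x - y)) - d y \<le> t * (d x - d y - (1 - t) / 2 * ?n)"
      by (simp add: algebra_simps)
    then show "(d (y + t *\<^sub>R (x - y)) - d y) / t \<le> d x - d y - (1 - t) / 2 * ?n"
      using t by (simp add: divide_simps mult.commute)
  qed simp
  have "gd y \<bullet> (x - y) \<le> d x - d y - (1 - 0) / 2 * ?n"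
    by (rule tendsto_le[OF _ lim2 lim ev]) simp
  then show ?thesis unfolding bregman_def by simp
qed

lemma three_point:
  fixes Q :: "'a::euclidean_space set"
  assumes Q: "convex Q" and u: "u\<in>Q" and u': "u'\<in>Q" and x: "x\<in>Q"
    and dd: "\<forall>x\<in>Q. (d has_derivative (\<lambda>h. gd x \<bullet> h)) (at x within Q)"
    and opt: "\<forall>x\<in>Q. a * (g \<bullet> (u' - y)) + bregman d gd u' u \<le> a * (g \<bullet> (x - y)) + bregman d gd x u"
  shows "a * (g \<bullet> (u' - x)) \<le> bregman d gd x u - bregman d gd x u' - bregman d gd u' u"
proof -
  let ?q = "\<lambda>t. a * (g \<bullet> (x - u')) - gd u \<bullet> (x - u') + (d (u' + t *\<^sub>R (x - u')) - d u') / t"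
  have lim0: "((\<lambda>t. (d (u' + t *\<^sub>R (x - u')) - d u') / t) \<longlongrightarrow> gd u' \<bullet> (x - u')) (at_right 0)"
    by (rule dir_lim[OF Q u' x dd])
  have lim: "(?q \<longlongrightarrow> a * (g \<bullet> (x - u')) - gd u \<bullet> (x - u') + gd u' \<bullet> (x - u')) (at_right 0)"
    by (intro tendsto_intros lim0)
  have ev: "eventually (\<lambda>t. 0 \<le> ?q t) (at_right (0::real))"
  proof (rule eventually_at_rightI[of 0 1])
    fix t :: real assume t: "t \<in> {0<..<1}"
    let ?z = "u' + t *\<^sub>R (x - u')"
    have "?z = (1 - t) *\<^sub>R u' + t *\<^sub>R x" by (simp add: algebra_simps)
    then have zQ: "?z \<in> Q" using Q u' x t unfolding convex_alt by auto
    have "a * (g \<bullet> (u' - y)) + bregman d gd u' u \<le> a * (g \<bullet> (?z - y)) + bregman d gd ?z u"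
      using opt zQ by blast
    then have "0 \<le> t * (a * (g \<bullet> (x - u')) - gd u \<bullet> (x - u')) + (d ?z - d u')"
      unfolding bregman_def by (simp add: algebra_simps inner_diff_right inner_add_right)
    then have "0 \<le> (t * (a * (g \<bullet> (x - u')) - gd u \<bullet> (x - u')) + (d ?z - d u')) / t"
      using t by simp
    also have "\<dots> = ?q t" using t by (simp add: add_divide_distrib)
    finally show "0 \<le> ?q t" .
  qed simp
  have "0 \<le> a * (g \<bullet> (x - u')) - gd u \<bullet> (x - u') + gd u' \<bullet> (x - u')"
    by (rule tendsto_lowerbound[OF lim ev]) simp
  then show ?thesis unfolding bregman_def
    by (simp add: algebra_simps inner_diff_right inner_diff_left)
qed

lemma nrm_sum:
  assumes N: "is_norm_fn nrm" and fin: "finite B"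
  shows "nrm (\<Sum>b\<in>B. f b) \<le> (\<Sum>b\<in>B. nrm (f b))"
  using fin
proof (induction B rule: finite_induct)
  case empty then show ?case using N unfolding is_norm_fn_def by (metis is_norm_fn_def order_refl sum.empty)
next
  case (insert b B)
  have "nrm (f b + sum f B) \<le> nrm (f b) + nrm (sum f B)" using N unfolding is_norm_fn_def by blast
  then show ?case using insert by simp
qed

lemma nrm_lower:
  fixes nrm :: "'a::euclidean_space \<Rightarrow> real"
  assumes N: "is_norm_fn nrm"
  shows "\<exists>c>0. \<forall>x. c * norm x \<le> nrm x"
proof -
  have hom: "\<And>c x. nrm (c *\<^sub>R x) = \<bar>c\<bar> * nrm x" and tri: "\<And>x y. nrm (x + y) \<le> nrm x + nrm y"
    and pos: "\<And>x. 0 \<le> nrm x" and z: "\<And>x. nrm x = 0 \<longleftrightarrow> x = 0"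
    using N unfolding is_norm_fn_def by auto
  define M where "M = (\<Sum>b\<in>(Basis::'a set). nrm b)"
  have M0: "0 \<le> M" unfolding M_def by (simp add: pos sum_nonneg)
  have up: "nrm x \<le> M * norm x" for x
  proof -
    have "nrm x = nrm (\<Sum>b\<in>Basis. (x \<bullet> b) *\<^sub>R b)" by (simp add: euclidean_representation)
    also have "\<dots> \<le> (\<Sum>b\<in>Basis. nrm ((x \<bullet> b) *\<^sub>R b))" by (rule nrm_sum[OF N]) simp
    also have "\<dots> = (\<Sum>b\<in>Basis. \<bar>x \<bullet> b\<bar> * nrm b)" by (simp add: hom)
    also have "\<dots> \<le> (\<Sum>b\<in>Basis. norm x * nrm b)"
      by (intro sum_mono mult_right_mono) (auto simp: Basis_le_norm pos)
    also have "\<dots> = M * norm x" unfolding M_def by (simp add: sum_distrib_left mult.commute)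
    finally show ?thesis .
  qed
  have sym: "nrm (x - y) = nrm (y - x)" for x y
  proof -
    have "nrm (y - x) = nrm ((-1) *\<^sub>R (x - y))" by simp
    also have "\<dots> = nrm (x - y)" by (simp only: hom)
    finally show ?thesis by simp
  qed
  have lip: "\<bar>nrm x - nrm y\<bar> \<le> M * norm (x - y)" for x y
  proof -
    have "nrm x \<le> nrm (x - y) + nrm y" using tri[of "x - y" y] by simp
    moreover have "nrm y \<le> nrm (y - x) + nrm x" using tri[of "y - x" x] by simp
    ultimately have "\<bar>nrm x - nrm y\<bar> \<le> nrm (x - y)" using sym[of x y] by linarith
    then show ?thesis using up[of "x - y"] by linarith
  qed
  have cont: "continuous_on (sphere 0 1) nrm"
    unfolding continuous_on_iff
  proof (intro ballI allI impI)
    fix x and e :: real assume "e > 0"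
    show "\<exists>d>0. \<forall>x'\<in>sphere 0 1. dist x' x < d \<longrightarrow> dist (nrm x') (nrm x) < e"
    proof (intro exI[of _ "e / (M + 1)"] conjI ballI impI)
      show "0 < e / (M + 1)" using \<open>e > 0\<close> M0 by simp
      fix x' assume "dist x' x < e / (M + 1)"
      then have "(M + 1) * norm (x' - x) < e" using M0 by (simp add: dist_norm field_simps)
      moreover have "dist (nrm x') (nrm x) \<le> M * norm (x' - x)" using lip[of x' x] by (simp add: dist_real_def)
      moreover have "M * norm (x' - x) \<le> (M + 1) * norm (x' - x)" by (simp add: mult_right_mono)
      ultimately show "dist (nrm x') (nrm x) < e" by linarith
    qed
  qed
  obtain b :: 'a where b: "b \<in> Basis" using nonempty_Basis by blast
  have ne: "sphere (0::'a) 1 \<noteq> {}" using b by (auto simp: sphere_def intro!: exI[of _ b])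
  obtain x0 where x0: "x0 \<in> sphere 0 1" "\<forall>y\<in>sphere 0 1. nrm x0 \<le> nrm y"
    using continuous_attains_inf[OF compact_sphere ne cont] by blast
  have "x0 \<noteq> 0" using x0 by auto
  then have c0: "nrm x0 > 0" using pos[of x0] z[of x0] by linarith
  show ?thesis
  proof (intro exI[of _ "nrm x0"] conjI allI c0)
    fix x :: 'a
    show "nrm x0 * norm x \<le> nrm x"
    proof (cases "x = 0")
      case True then show ?thesis using pos by simp
    next
      case False
      then have "(1 / norm x) *\<^sub>R x \<in> sphere 0 1" by simp
      then have "nrm x0 \<le> nrm ((1 / norm x) *\<^sub>R x)" using x0 by blast
      also have "\<dots> = nrm x / norm x" by (simp add: hom)
      finally show ?thesis using False by (simp add: field_simps)
    qed
  qed
qed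

lemma argmin_exists:
  fixes Q :: "'a::euclidean_space set"
  assumes Qc: "closed Q" and Q: "convex Q" and u: "u\<in>Q"
    and dd: "\<forall>x\<in>Q. (d has_derivative (\<lambda>h. gd x \<bullet> h)) (at x within Q)"
    and sc: "strongly_convex_wrt Q d nrm" and N: "is_norm_fn nrm"
  shows "\<exists>u'\<in>Q. \<forall>x\<in>Q. a * (g \<bullet> (u' - y)) + bregman d gd u' u \<le> a * (g \<bullet> (x - y)) + bregman d gd x u"
proof -
  define \<phi> where "\<phi> x = a * (g \<bullet> (x - y)) + bregman d gd x u" for x
  obtain c where c: "c > 0" "\<forall>x. c * norm x \<le> nrm x" using nrm_lower[OF N] by blast
  define r where "r = 2 * \<bar>a\<bar> * norm g / c\<^sup>2"
  have bnd: "norm (x - u) \<le> r" if x: "x \<in> Q" and le: "\<phi> x \<le> \<phi> u" for x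
  proof -
    let ?n = "norm (x - u)"
    have "?n = norm (u - x)" by (simp add: norm_minus_commute)
    then have cn: "c * ?n \<le> nrm (u - x)" using c by simp
    have "0 \<le> c * ?n" using c by simp
    then have "(c * ?n)\<^sup>2 \<le> (nrm (u - x))\<^sup>2" using cn by (simp add: power_mono)
    moreover have "bregman d gd x u \<ge> (nrm (u - x))\<^sup>2 / 2" by (rule breg_ge[OF Q u x dd sc])
    ultimately have V: "bregman d gd x u \<ge> c\<^sup>2 * ?n\<^sup>2 / 2" by (simp add: power_mult_distrib)
    have "\<phi> u = a * (g \<bullet> (u - y))" unfolding \<phi>_def bregman_def by simp
    then have "a * (g \<bullet> (x - u)) + bregman d gd x u \<le> 0"
      using le unfolding \<phi>_def by (simp add: inner_diff_right algebra_simps)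
    moreover have "- (\<bar>a\<bar> * norm g * ?n) \<le> a * (g \<bullet> (x - u))"
    proof -
      have "\<bar>a * (g \<bullet> (x - u))\<bar> \<le> \<bar>a\<bar> * (norm g * ?n)"
        unfolding abs_mult by (intro mult_left_mono Cauchy_Schwarz_ineq2) auto
      then show ?thesis by (simp add: mult.assoc)
    qed
    ultimately have "c\<^sup>2 * ?n\<^sup>2 / 2 \<le> \<bar>a\<bar> * norm g * ?n" using V by linarith
    then have "?n * (c\<^sup>2 * ?n) \<le> ?n * (2 * \<bar>a\<bar> * norm g)" by (simp add: power2_eq_square algebra_simps)
    show ?thesis
    proof (cases "?n = 0")
      case True then show ?thesis unfolding r_def by simp
    next
      case False
      then have "?n > 0" by simp
      with \<open>?n * (c\<^sup>2 * ?n) \<le> ?n * (2 * \<bar>a\<bar> * norm g)\<close> have "c\<^sup>2 * ?n \<le> 2 * \<bar>a\<bar> * norm g"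
        by simp
      then show ?thesis unfolding r_def using c by (simp add: field_simps)
    qed
  qed
  have dcont: "continuous_on Q d"
    unfolding continuous_on_eq_continuous_within using dd has_derivative_continuous by blast
  have pcont: "continuous_on Q \<phi>"
    unfolding \<phi>_def bregman_def by (intro continuous_intros dcont)
  let ?K = "Q \<inter> cball u r"
  have K: "compact ?K" using Qc by (intro closed_Int_compact) auto
  have "u \<in> ?K" using u bnd[OF u] by simp
  then have Kne: "?K \<noteq> {}" by blast
  obtain m where m: "m \<in> ?K" "\<forall>x\<in>?K. \<phi> m \<le> \<phi> x"
    using continuous_attains_inf[OF K Kne continuous_on_subset[OF pcont]] by blast
  have "\<forall>x\<in>Q. \<phi> m \<le> \<phi> x"
  proof
    fix x assume x: "x \<in> Q"
    show "\<phi> m \<le> \<phi> x"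
    proof (cases "x \<in> cball u r")
      case True then show ?thesis using m x by blast
    next
      case False
      then have "\<not> \<phi> x \<le> \<phi> u" using bnd[OF x] by (auto simp: dist_norm norm_minus_commute)
      moreover have "\<phi> m \<le> \<phi> u" using m \<open>u \<in> ?K\<close> by blast
      ultimately show ?thesis by linarith
    qed
  qed
  then show ?thesis using m unfolding \<phi>_def by blast
qed

lemma root_ok:
  fixes L A :: real
  assumes L: "L > 0" and A: "A \<ge> 0"
  defines "b \<equiv> (1 + sqrt (1 + 4 * L * A)) / (2 * L)"
  shows "A + b = L * b\<^sup>2" "b > 0" "\<forall>\<beta>. A + \<beta> = L * \<beta>\<^sup>2 \<longrightarrow> \<beta> \<le> b" "b \<ge> 1 / L"
proof -
  define s where "s = sqrt (1 + 4 * L * A)"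
  have s2: "s\<^sup>2 = 1 + 4 * L * A" unfolding s_def using L A by simp
  have s1: "s \<ge> 1" unfolding s_def using L A by simp
  have bs: "b = (1 + s) / (2 * L)" unfolding b_def s_def ..
  show "A + b = L * b\<^sup>2" unfolding bs using L s2
    by (simp add: field_simps power2_eq_square)
  show bpos: "b > 0" unfolding bs using L s1 by simp
  show bge: "b \<ge> 1 / L" unfolding bs using L s1 by (simp add: field_simps)
  show "\<forall>\<beta>. A + \<beta> = L * \<beta>\<^sup>2 \<longrightarrow> \<beta> \<le> b"
  proof (intro allI impI)
    fix \<beta> assume h: "A + \<beta> = L * \<beta>\<^sup>2"
    show "\<beta> \<le> b"
    proof (rule ccontr)
      assume "\<not> \<beta> \<le> b"
      then have gt: "\<beta> > b" by simp
      have eqb: "A + b = L * b\<^sup>2" unfolding bs using L s2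
        by (simp add: field_simps power2_eq_square)
      have "(\<beta> - b) * (L * (\<beta> + b)) = (\<beta> - b) * 1"
        using h eqb by (simp add: algebra_simps power2_eq_square)
      then have "L * (\<beta> + b) = 1" using gt by simp
      then have "\<beta> = 1 / L - b" using L by (simp add: field_simps)
      then have "\<beta> \<le> 0" using bge by simp
      then show False using gt bpos by simp
    qed
  qed
qed

lemma comb_in:
  fixes Q :: "'a::real_vector set"
  assumes Q: "convex Q" and A: "A \<ge> 0" and a: "\<alpha> > 0" and x: "x \<in> Q" and u: "u \<in> Q"
  shows "(1 / (A + \<alpha>)) *\<^sub>R (\<alpha> *\<^sub>R u + A *\<^sub>R x) = (1 - \<alpha> / (A + \<alpha>)) *\<^sub>R x + (\<alpha> / (A + \<alpha>)) *\<^sub>R u"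
    and "(1 / (A + \<alpha>)) *\<^sub>R (\<alpha> *\<^sub>R u + A *\<^sub>R x) \<in> Q"
proof -
  have ne: "A + \<alpha> \<noteq> 0" using A a by simp
  have "1 - \<alpha> / (A + \<alpha>) = A / (A + \<alpha>)" using ne by (simp add: field_simps)
  then show eq: "(1 / (A + \<alpha>)) *\<^sub>R (\<alpha> *\<^sub>R u + A *\<^sub>R x) = (1 - \<alpha> / (A + \<alpha>)) *\<^sub>R x + (\<alpha> / (A + \<alpha>)) *\<^sub>R u"
    by (simp add: scaleR_add_right add.commute)
  have "0 \<le> \<alpha> / (A + \<alpha>)" "\<alpha> / (A + \<alpha>) \<le> 1" using A a by auto
  then show "(1 / (A + \<alpha>)) *\<^sub>R (\<alpha> *\<^sub>R u + A *\<^sub>R x) \<in> Q"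
    unfolding eq using Q x u unfolding convex_alt by blast
qed

lemma step_ineq:
  fixes x u u' xs y x' g :: "'a::real_inner"
  assumes A: "A \<ge> 0" and a: "\<alpha> > 0" and A': "A' = A + \<alpha>" and AL: "A' = L' * \<alpha>\<^sup>2" and L': "L' > 0"
    and y: "y = (1 / A') *\<^sub>R (\<alpha> *\<^sub>R u + A *\<^sub>R x)"
    and x': "x' = (1 / A') *\<^sub>R (\<alpha> *\<^sub>R u' + A *\<^sub>R x)"
    and three: "\<alpha> * (g \<bullet> (u' - xs)) \<le> Vxu - Vxu' - Vu'u"
    and ls: "fdx' \<le> fdy + g \<bullet> (x' - y) + L' * Vx'y + \<delta>"
    and fx': "fx' \<le> fdx' + \<delta>"
    and lo1: "fdy + g \<bullet> (x - y) \<le> fx" and lo2: "fdy + g \<bullet> (xs - y) \<le> fxs"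
    and tsp: "Vx'y \<le> (\<alpha> / A')\<^sup>2 * Vu'u"
  shows "A' * fx' \<le> A * fx + \<alpha> * fxs + Vxu - Vxu' + 2 * A' * \<delta>"
proof -
  have A'pos: "A' > 0" using A a A' by simp
  have Ay: "A' *\<^sub>R y = \<alpha> *\<^sub>R u + A *\<^sub>R x" using y A'pos by simp
  have Ax': "A' *\<^sub>R x' = \<alpha> *\<^sub>R u' + A *\<^sub>R x" using x' A'pos by simp
  have e1: "A' * (g \<bullet> (x' - y)) = \<alpha> * (g \<bullet> (u' - u))"
  proof -
    have "A' * (g \<bullet> (x' - y)) = g \<bullet> (A' *\<^sub>R x' - A' *\<^sub>R y)" by (simp add: algebra_simps)
    also have "\<dots> = g \<bullet> (\<alpha> *\<^sub>R (u' - u))" unfolding Ax' Ay by (simp add: algebra_simps)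
    finally show ?thesis by simp
  qed
  have e2: "\<alpha> * (g \<bullet> (y - u)) = A * (g \<bullet> (x - y))"
  proof -
    have "\<alpha> *\<^sub>R y + A *\<^sub>R y = \<alpha> *\<^sub>R u + A *\<^sub>R x" using Ay A' by (simp add: scaleR_add_left add.commute)
    then have "\<alpha> *\<^sub>R (y - u) = A *\<^sub>R (x - y)" by (simp add: algebra_simps)
    then have "g \<bullet> (\<alpha> *\<^sub>R (y - u)) = g \<bullet> (A *\<^sub>R (x - y))" by simp
    then show ?thesis by simp
  qed
  have e3: "\<alpha> * (g \<bullet> (u' - u)) = \<alpha> * (g \<bullet> (u' - xs)) + \<alpha> * (g \<bullet> (xs - y)) + \<alpha> * (g \<bullet> (y - u))"
    by (simp add: algebra_simps inner_diff_right)
  have e4: "A' * (L' * Vx'y) \<le> Vu'u"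
  proof -
    have "A' * (L' * Vx'y) \<le> A' * (L' * ((\<alpha> / A')\<^sup>2 * Vu'u))"
      using tsp A'pos L' by (simp add: mult_left_mono)
    also have "\<dots> = Vu'u" using A'pos AL L' a by (simp add: field_simps power2_eq_square)
    finally show ?thesis .
  qed
  have "A' * fx' \<le> A' * (fdy + g \<bullet> (x' - y) + L' * Vx'y + 2 * \<delta>)"
    using ls fx' A'pos by (intro mult_left_mono) auto
  also have "\<dots> = A' * fdy + A' * (g \<bullet> (x' - y)) + A' * (L' * Vx'y) + 2 * A' * \<delta>"
    by (simp add: algebra_simps)
  finally have main: "A' * fx' \<le> A' * fdy + A' * (g \<bullet> (x' - y)) + A' * (L' * Vx'y) + 2 * A' * \<delta>" .
  have l1: "A * (fdy + g \<bullet> (x - y)) \<le> A * fx" using lo1 A by (simp add: mult_left_mono)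
  have l2: "\<alpha> * (fdy + g \<bullet> (xs - y)) \<le> \<alpha> * fxs" using lo2 a by (simp add: mult_left_mono)
  have "A' * fdy = A * fdy + \<alpha> * fdy" using A' by (simp add: algebra_simps)
  then show ?thesis using main e1 e2 e3 e4 l1 l2 three
    by (simp add: algebra_simps)
qed

lemma sqrt_step:
  fixes a b l M :: real
  assumes a: "0 \<le> a" and l: "0 < l" "l \<le> M" and b: "b = l * (b - a)\<^sup>2" and ab: "a < b"
  shows "sqrt b \<ge> sqrt a + 1 / (2 * sqrt M)"
proof -
  define sa where "sa = sqrt a"
  define sb where "sb = sqrt b"
  have sa0: "sa \<ge> 0" and sb0: "sb > 0" using a ab unfolding sa_def sb_def by auto
  have sab: "sa \<le> sb" using ab unfolding sa_def sb_def by simp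
  have sa2: "sa\<^sup>2 = a" and sb2: "sb\<^sup>2 = b" using a ab unfolding sa_def sb_def by auto
  have "(b - a)\<^sup>2 = (sb / sqrt l)\<^sup>2" using b l sb2 by (simp add: power_divide field_simps)
  then have "b - a = sb / sqrt l" using ab sb0 l
    by (metis (no_types, lifting) diff_gt_0_iff_gt divide_pos_pos less_eq_real_def power2_eq_iff_nonneg real_sqrt_gt_0_iff)
  then have "(sb - sa) * (sb + sa) = sb / sqrt l" using sa2 sb2 by (simp add: algebra_simps power2_eq_square)
  moreover have "sb + sa \<le> 2 * sb" using sab by simp
  moreover have "sb - sa \<ge> 0" using sab by simp
  ultimately have "sb / sqrt l \<le> (sb - sa) * (2 * sb)" by (metis mult_left_mono)
  then have "sb * (1 / sqrt l) \<le> sb * (2 * (sb - sa))" by (simp add: algebra_simps)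
  then have "1 / sqrt l \<le> 2 * (sb - sa)" using sb0 by (rule mult_left_le_imp_le)
  then have "1 / (2 * sqrt l) \<le> sb - sa" by (simp add: field_simps)
  moreover have "1 / (2 * sqrt M) \<le> 1 / (2 * sqrt l)" using l by (simp add: frac_le)
  ultimately show ?thesis unfolding sa_def sb_def by simp
qed

lemma trial_basic:
  fixes Q :: "'a::euclidean_space set"
  assumes Q: "convex Q" and A: "A \<ge> 0" and Lk: "Lk > 0" and x: "x \<in> Q" and u: "u \<in> Q"
    and T: "adap_trial Q d gd fd gdd \<delta> Lk A x u i L' \<alpha>' A' y' u' x'"
  shows "L' > 0" "\<alpha>' > 0" "A' = A + \<alpha>'" "A' = L' * \<alpha>'\<^sup>2" "y' \<in> Q" "u' \<in> Q" "x' \<in> Q"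
proof -
  have L'd: "L' = 2 powr (real i - 1) * Lk" using T unfolding adap_trial_def by blast
  then show L': "L' > 0" using Lk by simp
  have eq: "A + \<alpha>' = L' * \<alpha>'\<^sup>2" and mx: "\<forall>\<beta>. A + \<beta> = L' * \<beta>\<^sup>2 \<longrightarrow> \<beta> \<le> \<alpha>'"
    and A': "A' = A + \<alpha>'" and y': "y' = (1 / A') *\<^sub>R (\<alpha>' *\<^sub>R u + A *\<^sub>R x)" and u': "u' \<in> Q"
    and x': "x' = (1 / A') *\<^sub>R (\<alpha>' *\<^sub>R u' + A *\<^sub>R x)"
    using T unfolding adap_trial_def by auto
  define b where "b = (1 + sqrt (1 + 4 * L' * A)) / (2 * L')"
  have "A + b = L' * b\<^sup>2" "b > 0" using root_ok[OF L' A] unfolding b_def by auto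
  then have "b \<le> \<alpha>'" using mx by blast
  then show a: "\<alpha>' > 0" using \<open>b > 0\<close> by simp
  show "A' = A + \<alpha>'" by (rule A')
  show "A' = L' * \<alpha>'\<^sup>2" using eq A' by simp
  show "y' \<in> Q" unfolding y' A' by (rule comb_in(2)[OF Q A a x u])
  show "u' \<in> Q" by (rule u')
  show "x' \<in> Q" unfolding x' A' by (rule comb_in(2)[OF Q A a x u'])
qed

lemma trial_exists:
  fixes Q :: "'a::euclidean_space set"
  assumes Qc: "closed Q" and Q: "convex Q" and A: "A \<ge> 0" and Lk: "Lk > 0" and x: "x \<in> Q" and u: "u \<in> Q"
    and dd: "\<forall>x\<in>Q. (d has_derivative (\<lambda>h. gd x \<bullet> h)) (at x within Q)"
    and sc: "strongly_convex_wrt Q d nrm" and N: "is_norm_fn nrm"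
    and orc: "\<forall>y\<in>Q. is_dL_orc Q d gd \<delta> L f fd gdd y"
    and big: "L \<le> 2 powr (real i - 1) * Lk"
  shows "\<exists>L' \<alpha>' A' y' u' x'. adap_trial Q d gd fd gdd \<delta> Lk A x u i L' \<alpha>' A' y' u' x'"
proof -
  define L' where "L' = 2 powr (real i - 1) * Lk"
  have L': "L' > 0" unfolding L'_def using Lk by simp
  define b where "b = (1 + sqrt (1 + 4 * L' * A)) / (2 * L')"
  have r: "A + b = L' * b\<^sup>2" "b > 0" "\<forall>\<beta>. A + \<beta> = L' * \<beta>\<^sup>2 \<longrightarrow> \<beta> \<le> b"
    using root_ok[OF L' A] unfolding b_def by auto
  define A' where "A' = A + b"
  define y' where "y' = (1 / A') *\<^sub>R (b *\<^sub>R u + A *\<^sub>R x)"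
  have yQ: "y' \<in> Q" unfolding y'_def A'_def by (rule comb_in(2)[OF Q A r(2) x u])
  obtain u' where u': "u' \<in> Q" "\<forall>z\<in>Q. b * (gdd y' \<bullet> (u' - y')) + bregman d gd u' u \<le> b * (gdd y' \<bullet> (z - y')) + bregman d gd z u"
    using argmin_exists[OF Qc Q u dd sc N] by blast
  define x' where "x' = (1 / A') *\<^sub>R (b *\<^sub>R u' + A *\<^sub>R x)"
  have xQ: "x' \<in> Q" unfolding x'_def A'_def by (rule comb_in(2)[OF Q A r(2) x u'(1)])
  have "0 \<le> f x' - (fd x' + gdd x' \<bullet> (x' - x'))" using orc xQ unfolding is_dL_orc_def by blast
  then have o1: "fd x' \<le> f x'" by simp
  have "f x' - (fd y' + gdd y' \<bullet> (x' - y')) \<le> L * bregman d gd x' y' + \<delta>"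
    using orc xQ yQ unfolding is_dL_orc_def by blast
  then have o2: "f x' \<le> fd y' + gdd y' \<bullet> (x' - y') + L * bregman d gd x' y' + \<delta>" by simp
  have V0: "bregman d gd x' y' \<ge> 0"
    using breg_ge[OF Q yQ xQ dd sc] zero_le_power2[of "nrm (y' - x')"] by linarith
  have "L * bregman d gd x' y' \<le> L' * bregman d gd x' y'"
    using big V0 unfolding L'_def by (simp add: mult_right_mono)
  then have ls: "fd x' \<le> fd y' + gdd y' \<bullet> (x' - y') + L' * bregman d gd x' y' + \<delta>" using o1 o2 by linarith
  have "adap_trial Q d gd fd gdd \<delta> Lk A x u i L' b A' y' u' x'"
    unfolding adap_trial_def
    by (intro conjI L'_def r(1) r(3) A'_def y'_def u'(1) x'_def ls u'(2))
  then show ?thesis by blast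
qed

theorem theorem1:
  fixes Q :: "'a::euclidean_space set"
    and nrm :: "'a \<Rightarrow> real"
    and f :: "'a \<Rightarrow> real" and gf :: "'a \<Rightarrow> 'a"
    and d :: "'a \<Rightarrow> real" and gd :: "'a \<Rightarrow> 'a"
    and fd :: "nat \<Rightarrow> 'a \<Rightarrow> real" and gdd :: "nat \<Rightarrow> 'a \<Rightarrow> 'a"
    and \<delta> :: "nat \<Rightarrow> real"
    and x0 xstar :: 'a and L L0 R :: real
    and Ls \<alpha>s As :: "nat \<Rightarrow> real" and ys us xs :: "nat \<Rightarrow> 'a" and ik :: "nat \<Rightarrow> nat"
  assumes norm: "is_norm_fn nrm"
    and Q: "closed Q" "convex Q"
    and f_convex: "convex_on Q f"
    and f_diff: "\<exists>U. open U \<and> rel_interior Q \<subseteq> U \<and>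
                   (\<forall>x\<in>U. (f has_derivative (\<lambda>h. gf x \<bullet> h)) (at x))"
    and d_diff: "\<forall>x\<in>Q. (d has_derivative (\<lambda>h. gd x \<bullet> h)) (at x within Q)"
    and d_cont: "continuous_on Q gd"
    and d_strong: "strongly_convex_wrt Q d nrm"
    and L_pos: "L > 0"
    and smooth: "rel_smooth Q f gf d gd L"
    and tsp: "triangular_scaling Q d gd 2"
    and orc: "\<forall>k. \<forall>y\<in>Q. is_dL_orc Q d gd (\<delta> k) L f (fd k) (gdd k) y"
    and \<delta>_pos: "\<forall>k. \<delta> k > 0"
    and x0: "x0 \<in> Q"
    and xstar: "xstar \<in> Q" "\<forall>x\<in>Q. f xstar \<le> f x"
    and R: "R > 0" "bregman d gd xstar x0 \<le> R\<^sup>2"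
    and L0: "0 < L0" "L0 < 2 * L"
    and run: "adapfgm_run Q d gd fd gdd \<delta> x0 L0 Ls \<alpha>s As ys us xs ik"
  shows "\<forall>N\<ge>1. f (xs N) - f xstar
           \<le> 8 * L * R\<^sup>2 / (real N + 1)\<^sup>2 + 2 * (\<Sum>k<N. As (Suc k) * \<delta> k) / As N"
proof -
  have dd: "\<forall>x\<in>Q. (d has_derivative (\<lambda>h. gd x \<bullet> h)) (at x within Q)" by (rule d_diff)
  have R0: "Ls 0 = L0" "As 0 = 0" "us 0 = x0" "xs 0 = x0"
    using run unfolding adapfgm_run_def by auto
  have T: "\<And>k. adap_trial Q d gd (fd k) (gdd k) (\<delta> k) (Ls k) (As k) (xs k) (us k) (ik k)
             (Ls (Suc k)) (\<alpha>s (Suc k)) (As (Suc k)) (ys (Suc k)) (us (Suc k)) (xs (Suc k))"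
    using run unfolding adapfgm_run_def by blast
  have F: "\<And>k j. j < ik k \<Longrightarrow> \<not> (\<exists>L' \<alpha>' A' y' u' x'.
             adap_trial Q d gd (fd k) (gdd k) (\<delta> k) (Ls k) (As k) (xs k) (us k) j L' \<alpha>' A' y' u' x')"
    using run unfolding adapfgm_run_def by blast
  have orck: "\<And>k. \<forall>y\<in>Q. is_dL_orc Q d gd (\<delta> k) L f (fd k) (gdd k) y" using orc by blast
  define inv where "inv k \<longleftrightarrow> As k \<ge> 0 \<and> Ls k > 0 \<and> Ls k \<le> 2 * L \<and> xs k \<in> Q \<and> us k \<in> Q" for k
  have invall: "inv k" for k
  proof (induction k)
    case 0 show ?case unfolding inv_def using R0 x0 L0 by simp
  next
    case (Suc k)
    then have I: "As k \<ge> 0" "Ls k > 0" "Ls k \<le> 2 * L" "xs k \<in> Q" "us k \<in> Q" unfolding inv_def by auto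
    note B = trial_basic[OF Q(2) I(1) I(2) I(4) I(5) T[of k]]
    have Ld: "Ls (Suc k) = 2 powr (real (ik k) - 1) * Ls k" using T[of k] unfolding adap_trial_def by blast
    have "Ls (Suc k) \<le> 2 * L"
    proof (rule ccontr)
      assume big: "\<not> Ls (Suc k) \<le> 2 * L"
      show False
      proof (cases "ik k = 0")
        case True
        then have "Ls (Suc k) = Ls k / 2" using Ld by (simp add: powr_minus_divide)
        then show False using big I L_pos by simp
      next
        case False
        define j where "j = ik k - 1"
        have jl: "j < ik k" unfolding j_def using False by simp
        have "2 powr (real (ik k) - 1) = 2 powr (real j - 1) * 2 powr 1"
        proof -
          have "real (ik k) - 1 = (real j - 1) + 1" unfolding j_def using False by (simp add: of_nat_diff)
          then show ?thesis by (simp only: powr_add)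
        qed
        then have "Ls (Suc k) = 2 * (2 powr (real j - 1) * Ls k)" using Ld by simp
        then have "L \<le> 2 powr (real j - 1) * Ls k" using big by simp
        then show False
          using F[OF jl] trial_exists[OF Q(1) Q(2) I(1) I(2) I(4) I(5) dd d_strong norm orck] by blast
      qed
    qed
    then show ?case unfolding inv_def using B I by auto
  qed
  have I: "\<And>k. As k \<ge> 0" "\<And>k. Ls k > 0" "\<And>k. Ls k \<le> 2 * L" "\<And>k. xs k \<in> Q" "\<And>k. us k \<in> Q"
    using invall unfolding inv_def by auto
  have B: "\<And>k. \<alpha>s (Suc k) > 0" "\<And>k. As (Suc k) = As k + \<alpha>s (Suc k)"
    "\<And>k. As (Suc k) = Ls (Suc k) * (\<alpha>s (Suc k))\<^sup>2" "\<And>k. ys (Suc k) \<in> Q"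
    using trial_basic[OF Q(2) I(1) I(2) I(4) I(5) T] by auto
  have sumineq: "As N * f (xs N) \<le> As N * f xstar + bregman d gd xstar x0 - bregman d gd xstar (us N)
      + 2 * (\<Sum>k<N. As (Suc k) * \<delta> k)" for N
  proof (induction N)
    case 0 show ?case using R0 by simp
  next
    case (Suc k)
    let ?A = "As k" and ?a = "\<alpha>s (Suc k)" and ?A' = "As (Suc k)" and ?L' = "Ls (Suc k)"
      and ?x = "xs k" and ?u = "us k" and ?u' = "us (Suc k)" and ?y = "ys (Suc k)" and ?x' = "xs (Suc k)"
      and ?g = "gdd k (ys (Suc k))"
    have y: "?y = (1 / ?A') *\<^sub>R (?a *\<^sub>R ?u + ?A *\<^sub>R ?x)"
      and x': "?x' = (1 / ?A') *\<^sub>R (?a *\<^sub>R ?u' + ?A *\<^sub>R ?x)"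
      and opt: "\<forall>z\<in>Q. ?a * (?g \<bullet> (?u' - ?y)) + bregman d gd ?u' ?u \<le> ?a * (?g \<bullet> (z - ?y)) + bregman d gd z ?u"
      and ls: "fd k ?x' \<le> fd k ?y + ?g \<bullet> (?x' - ?y) + ?L' * bregman d gd ?x' ?y + \<delta> k"
      using T[of k] unfolding adap_trial_def by blast+
    have three: "?a * (?g \<bullet> (?u' - xstar)) \<le> bregman d gd xstar ?u - bregman d gd xstar ?u' - bregman d gd ?u' ?u"
      by (rule three_point[OF Q(2) I(5) I(5) xstar(1) dd opt])
    have "0 \<le> f ?x' - (fd k ?x' + gdd k ?x' \<bullet> (?x' - ?x'))" using orck[of k] I(4) unfolding is_dL_orc_def by blast
    moreover have "f ?x' - (fd k ?x' + gdd k ?x' \<bullet> (?x' - ?x')) \<le> L * bregman d gd ?x' ?x' + \<delta> k"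
      using orck[of k] I(4) unfolding is_dL_orc_def by blast
    ultimately have fx': "f ?x' \<le> fd k ?x' + \<delta> k" by (simp add: bregman_def)
    have lo1: "fd k ?y + ?g \<bullet> (?x - ?y) \<le> f ?x"
    proof -
      have "0 \<le> f ?x - (fd k ?y + ?g \<bullet> (?x - ?y))" using orck[of k] I(4) B(4) unfolding is_dL_orc_def by blast
      then show ?thesis by simp
    qed
    have lo2: "fd k ?y + ?g \<bullet> (xstar - ?y) \<le> f xstar"
    proof -
      have "0 \<le> f xstar - (fd k ?y + ?g \<bullet> (xstar - ?y))" using orck[of k] xstar(1) B(4) unfolding is_dL_orc_def by blast
      then show ?thesis by simp
    qed
    have tsp': "bregman d gd ?x' ?y \<le> (?a / ?A')\<^sup>2 * bregman d gd ?u' ?u"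
    proof -
      have th: "0 \<le> ?a / ?A'" "?a / ?A' \<le> 1" using B(1)[of k] I(1)[of k] B(2)[of k] by auto
      have ex: "?x' = (1 - ?a / ?A') *\<^sub>R ?x + (?a / ?A') *\<^sub>R ?u'"
        unfolding x' B(2)[of k] by (rule comb_in(1)[OF Q(2) I(1) B(1) I(4) I(5)])
      have ey: "?y = (1 - ?a / ?A') *\<^sub>R ?x + (?a / ?A') *\<^sub>R ?u"
        unfolding y B(2)[of k] by (rule comb_in(1)[OF Q(2) I(1) B(1) I(4) I(5)])
      have "bregman d gd ((1 - ?a / ?A') *\<^sub>R ?x + (?a / ?A') *\<^sub>R ?u') ((1 - ?a / ?A') *\<^sub>R ?x + (?a / ?A') *\<^sub>R ?u)
          \<le> (?a / ?A') powr 2 * bregman d gd ?u' ?u"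
        using tsp I(4)[of k] I(5)[of "Suc k"] I(5)[of k] th unfolding triangular_scaling_def by simp
      then show ?thesis using th ex ey by simp
    qed
    have st: "?A' * f ?x' \<le> ?A * f ?x + ?a * f xstar + bregman d gd xstar ?u - bregman d gd xstar ?u' + 2 * ?A' * \<delta> k"
      by (rule step_ineq[OF I(1) B(1) B(2) B(3) I(2) y x' three ls fx' lo1 lo2 tsp'])
    have "?A' * f xstar = ?A * f xstar + ?a * f xstar" using B(2)[of k] by (simp add: algebra_simps)
    then show ?case using st Suc.IH by simp
  qed
  have sq: "sqrt (As N) \<ge> (real N + 1) / (2 * sqrt (2 * L))" if N: "N \<ge> 1" for N
    using N
  proof (induction N rule: nat_induct_at_least)
    case base
    have a1: "As 1 = \<alpha>s 1" using B(2)[of 0] R0 by simp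
    have "\<alpha>s 1 = Ls 1 * (\<alpha>s 1)\<^sup>2" using B(3)[of 0] a1 by simp
    then have "1 = Ls 1 * \<alpha>s 1" using B(1)[of 0] by (simp add: power2_eq_square)
    then have "As 1 = 1 / Ls 1" using a1 I(2)[of 1] by (simp add: field_simps)
    moreover have "1 / (2 * L) \<le> 1 / Ls 1" using I(2)[of 1] I(3)[of 1] by (simp add: frac_le)
    ultimately have "sqrt (1 / (2 * L)) \<le> sqrt (As 1)" by simp
    moreover have "sqrt (1 / (2 * L)) = (real 1 + 1) / (2 * sqrt (2 * L))"
      using L_pos by (simp add: real_sqrt_divide field_simps)
    ultimately show ?case by simp
  next
    case (Suc n)
    have "sqrt (As (Suc n)) \<ge> sqrt (As n) + 1 / (2 * sqrt (2 * L))"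
    proof (rule sqrt_step[OF I(1) I(2) I(3)])
      show "As (Suc n) = Ls (Suc n) * (As (Suc n) - As n)\<^sup>2" using B(2)[of n] B(3)[of n] by simp
      show "As n < As (Suc n)" using B(1)[of n] B(2)[of n] by simp
    qed
    then show ?case using Suc.IH by (simp add: add_divide_distrib)
  qed
  show ?thesis
  proof (intro allI impI)
    fix N :: nat assume N: "N \<ge> 1"
    let ?S = "(\<Sum>k<N. As (Suc k) * \<delta> k)"
    have "0 \<le> (real N + 1) / (2 * sqrt (2 * L))" using L_pos by simp
    then have "((real N + 1) / (2 * sqrt (2 * L)))\<^sup>2 \<le> (sqrt (As N))\<^sup>2"
      using sq[OF N] by (simp add: power_mono)
    then have Abnd: "(real N + 1)\<^sup>2 / (8 * L) \<le> As N"
      using I(1)[of N] L_pos by (simp add: power_divide power_mult_distrib)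
    have Apos: "As N > 0"
      using Abnd L_pos by (smt (verit) divide_pos_pos zero_less_power2 of_nat_less_0_iff)
    have V0: "bregman d gd xstar (us N) \<ge> 0"
      using breg_ge[OF Q(2) I(5)[of N] xstar(1) dd d_strong] zero_le_power2[of "nrm (us N - xstar)"] by linarith
    have "As N * (f (xs N) - f xstar) \<le> R\<^sup>2 + 2 * ?S"
      using sumineq[of N] V0 R(2) by (simp add: algebra_simps)
    then have "f (xs N) - f xstar \<le> (R\<^sup>2 + 2 * ?S) / As N"
      using Apos by (simp add: field_simps)
    also have "\<dots> = R\<^sup>2 / As N + 2 * ?S / As N" by (simp add: add_divide_distrib)
    also have "R\<^sup>2 / As N \<le> R\<^sup>2 / ((real N + 1)\<^sup>2 / (8 * L))"
      by (rule divide_left_mono[OF Abnd]) (use L_pos Apos in auto)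
    also have "R\<^sup>2 / ((real N + 1)\<^sup>2 / (8 * L)) = 8 * L * R\<^sup>2 / (real N + 1)\<^sup>2"
      by simp
    finally show "f (xs N) - f xstar \<le> 8 * L * R\<^sup>2 / (real N + 1)\<^sup>2 + 2 * ?S / As N" by simp
  qed
qed

end
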